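(* In the setting described in the context, for every closed point $p$ of $\mathbb{P}^1_K$ with singular fibre $X_p$, the resultant $\operatorname{res}(\Delta_p(s,t),\delta_p(s,t))$ of the binary forms $\Delta_p$ and $\delta_p$ is nonzero.
   Context: $K$ is a number field, $a_1,a_2,e\ge 0$ are integers, and $X$ is the smooth surface of bidegree $(e,2)$ in the $\mathbb{P}^2$-bundle $\mathbb{F}(0,a_1,a_2) = \mathbb{P}(\mathcal{O}\oplus\mathcal{O}(a_1)\oplus\mathcal{O}(a_2))$ over $\mathbb{P}^1_K$ cut out by $Q_{(s,t)}(\mathbf{x}) = \sum_{0\le i,j\le 2} f_{i,j}(s,t)x_ix_j$, with $f_{i,j}=f_{j,i}\in\mathcal{O}_K[s,t]$ binary forms of degree $a_i+a_j+e$ ($a_0=0$); $\pi:(s:t;\mathbf{x})\mapsto (s:t)$. Let $\Delta(s,t) = -4\det(f_{i,j}(s,t))$ and assume $t\nmid\Delta(s,t)$. Closed points $p$ with singular fibre correspond to irreducible factors $\Delta_p(s,t)\in\mathcal{O}_K[s,t]$ of $\Delta$ (up to constants) with $\Delta_p(1,0)\ne 0$; $\theta_p\in\overline{K}$ is a root of $\Delta_p(s,1)$ and $K(p)=K(\theta_p)$. The conic $Q_{(\theta_p,1)}(\mathbf{x})=0$ over $K(p)$ is singular with a unique singular point; $i_p\in\{0,1,2\}$ is the index of its first nonzero coordinate, and $\delta_p(s,t)$ is the discriminant ($\beta^2-4\alpha\gamma$ for $\alpha y^2+\beta yz+\gamma z^2$) of the binary quadratic form obtained by setting $x_{i_p}=0$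 in $Q_{(s,t)}$. *)

theory Defs
  imports "HOL-Analysis.Analysis" "Subresultants.Resultant_Prelim"
begin

text \<open>Number fields are modelled as subfields K of the complex numbers that are
  finite-dimensional over the rationals; the complex numbers serve as an algebraic
  closure containing the algebraic closure of K.\<close>

definition subfield_C :: "complex set \<Rightarrow> bool" where
  "subfield_C K \<longleftrightarrow> 0 \<in> K \<and> 1 \<in> K \<and> (\<forall>x\<in>K. \<forall>y\<in>K. x + y \<in> K \<and> x * y \<in> K \<and> - x \<in> K)
     \<and> (\<forall>x\<in>K. x \<noteq> 0 \<longrightarrow> inverse x \<in> K)"

definition number_field :: "complex set \<Rightarrow> bool" where
  "number_field K \<longleftrightarrow> subfield_C K \<and>
     (\<exists>bs :: complex list. \<forall>z\<in>K. \<exists>qs :: rat list. length qs = length bs \<and>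
         z = (\<Sum>i<length bs. of_rat (qs ! i) * bs ! i))"

definition algebraic_integer :: "complex \<Rightarrow> bool" where
  "algebraic_integer z \<longleftrightarrow> (\<exists>p :: int poly. monic p \<and> poly (map_poly of_int p) z = 0)"

definition ring_of_integers :: "complex set \<Rightarrow> complex set" where
  "ring_of_integers K = {z \<in> K. algebraic_integer z}"

definition poly_over :: "complex set \<Rightarrow> complex poly \<Rightarrow> bool" where
  "poly_over R p \<longleftrightarrow> (\<forall>i. coeff p i \<in> R)"

definition irreducible_over :: "complex set \<Rightarrow> complex poly \<Rightarrow> bool" where
  "irreducible_over K p \<longleftrightarrow> poly_over K p \<and> degree p > 0 \<and>
     (\<forall>q r. poly_over K q \<longrightarrow> poly_over K r \<longrightarrow> p = q * r \<longrightarrow> degree q = 0 \<or> degree r = 0)"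

text \<open>A binary form F(s,t) of degree d is represented by its dehomogenisation
  f(s) = F(s,1), a univariate polynomial of degree at most d;
  F(s,t) = sum over k of coeff f k * s^k * t^(d-k).\<close>
definition hom_eval :: "nat \<Rightarrow> complex poly \<Rightarrow> complex \<Rightarrow> complex \<Rightarrow> complex" where
  "hom_eval d f s t = (\<Sum>k\<le>d. coeff f k * s ^ k * t ^ (d - k))"

text \<open>Resultant of binary forms of degrees m and n (Sylvester determinant with the
  formal degrees m and n).\<close>
definition form_resultant :: "nat \<Rightarrow> nat \<Rightarrow> complex poly \<Rightarrow> complex poly \<Rightarrow> complex" where
  "form_resultant m n f g = resultant_sub m n f g"

definition Qform :: "(nat \<Rightarrow> nat) \<Rightarrow> nat \<Rightarrow> (nat \<Rightarrow> nat \<Rightarrow> complex poly)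
     \<Rightarrow> complex \<Rightarrow> complex \<Rightarrow> (nat \<Rightarrow> complex) \<Rightarrow> complex" where
  "Qform a e f s t x = (\<Sum>i<3. \<Sum>j<3. hom_eval (a i + a j + e) (f i j) s t * x i * x j)"

text \<open>Smoothness of X = {Q = 0} in F(0,a1,a2): X is the quotient of the zero set of Q in
  {(s,t) \<noteq> 0, x \<noteq> 0} by a free torus action, so X is smooth iff the gradient of Q with
  respect to (s,t,x0,x1,x2) does not vanish at any geometric point of that zero set.\<close>
definition smooth_surface :: "(nat \<Rightarrow> nat) \<Rightarrow> nat \<Rightarrow> (nat \<Rightarrow> nat \<Rightarrow> complex poly) \<Rightarrow> bool" where
  "smooth_surface a e f \<longleftrightarrow>
     (\<forall>s t x. (s \<noteq> 0 \<or> t \<noteq> 0) \<longrightarrow> (\<exists>i<3. x i \<noteq> 0) \<longrightarrow> Qform a e f s t x = 0 \<longrightarrow>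
        \<not> (deriv (\<lambda>s'. Qform a e f s' t x) s = 0 \<and>
            deriv (\<lambda>t'. Qform a e f s t' x) t = 0 \<and>
            (\<forall>i<3. deriv (\<lambda>y. Qform a e f s t (x(i := y))) (x i) = 0)))"

definition det3 :: "(nat \<Rightarrow> nat \<Rightarrow> 'a :: comm_ring_1) \<Rightarrow> 'a" where
  "det3 M = M 0 0 * M 1 1 * M 2 2 + M 0 1 * M 1 2 * M 2 0 + M 0 2 * M 1 0 * M 2 1
          - M 0 2 * M 1 1 * M 2 0 - M 0 1 * M 1 0 * M 2 2 - M 0 0 * M 1 2 * M 2 1"

text \<open>Dehomogenisation Delta(s,1) of Delta(s,t) = -4 det(f_ij(s,t)), a binary form of degree
  2 a1 + 2 a2 + 3 e.\<close>
definition Delta :: "(nat \<Rightarrow> nat \<Rightarrow> complex poly) \<Rightarrow> complex poly" where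
  "Delta f = - 4 * det3 f"

definition conic_singular_point :: "(nat \<Rightarrow> nat) \<Rightarrow> nat \<Rightarrow> (nat \<Rightarrow> nat \<Rightarrow> complex poly)
     \<Rightarrow> complex \<Rightarrow> (nat \<Rightarrow> complex) \<Rightarrow> bool" where
  "conic_singular_point a e f \<theta> x \<longleftrightarrow> (\<exists>i<3. x i \<noteq> 0) \<and>
     (\<forall>i<3. deriv (\<lambda>y. Qform a e f \<theta> 1 (x(i := y))) (x i) = 0)"

text \<open>delta_p (dehomogenised): discriminant beta^2 - 4 alpha gamma of the binary quadratic form
  alpha y^2 + beta y z + gamma z^2 = Q restricted to x_i = 0, where {j,k} are the other indices:
  alpha = f_jj, beta = 2 f_jk, gamma = f_kk.  It is a binary form of degree 2(a_j + a_k + e).\<close>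
definition small_delta :: "(nat \<Rightarrow> nat \<Rightarrow> complex poly) \<Rightarrow> nat \<Rightarrow> nat \<Rightarrow> complex poly" where
  "small_delta f j k = (2 * f j k) ^ 2 - 4 * f j j * f k k"

end

theory Submission
  imports Defs "Subresultants.Subresultant_Gcd" "HOL-Computational_Algebra.Field_as_Ring"
    "HOL-Computational_Algebra.Fundamental_Theorem_Algebra"
begin

lemma sylv_delete: assumes "coeff q (Suc n) = 0" shows
  "mat_delete (sylvester_mat_sub m (Suc n) p q) 0 0 = sylvester_mat_sub m n p q"
  proof (rule eq_matI, auto simp: mat_delete_def sylvester_mat_sub_def)
  fix i j assume "i - n \<le> Suc j" "\<not> i - n \<le> j" "\<not> i < n"
  hence "i - j = Suc n" by auto
  thus "coeff q (i - j) = 0" using assms by simp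
qed

lemma res_sub_step:
  fixes p q :: "'a :: comm_ring_1 poly"
  assumes "coeff q (Suc n) = 0"
  shows "resultant_sub m (Suc n) p q = coeff p m * resultant_sub m n p q"
proof -
  let ?S = "sylvester_mat_sub m (Suc n) p q"
  have "det ?S = (\<Sum>i<m + Suc n. ?S $$ (i,0) * cofactor ?S i 0)"
    by (rule laplace_expansion_column[OF sylvester_mat_sub_carrier], simp)
  also have "\<dots> = (\<Sum>i<m + Suc n. (if i = 0 then coeff p m * cofactor ?S 0 0 else 0))"
    by (rule sum.cong, auto simp: sylvester_mat_sub_index assms)
  also have "\<dots> = coeff p m * cofactor ?S 0 0" by simp
  also have "cofactor ?S 0 0 = resultant_sub m n p q"
    unfolding cofactor_def sylv_delete[OF assms] resultant_sub_def by simp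
  finally show ?thesis unfolding resultant_sub_def .
qed

lemma res_sub_gen:
  fixes p q :: "'a :: comm_ring_1 poly"
  assumes "degree q \<le> n"
  shows "resultant_sub (degree p) n p q = lead_coeff p ^ (n - degree q) * resultant p q"
  using assms
proof (induction n)
  case 0 then show ?case by (simp add: resultant_sub)
next
  case (Suc n)
  show ?case
  proof (cases "degree q = Suc n")
    case True then show ?thesis by (simp add: resultant_sub)
  next
    case False
    with Suc.prems have le: "degree q \<le> n" by auto
    hence "coeff q (Suc n) = 0" by (simp add: coeff_eq_0)
    from res_sub_step[OF this] Suc.IH[OF le] le show ?thesis
      by (simp add: Suc_diff_le)
  qed
qed

lemma common_root:
  fixes p q :: "complex poly"
  assumes "degree q \<le> n" "degree p > 0" "resultant_sub (degree p) n p q = 0"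
  shows "\<exists>z. poly p z = 0 \<and> poly q z = 0"
proof -
  have "p \<noteq> 0" using assms by auto
  hence "resultant p q = 0" using assms res_sub_gen[OF assms(1), of p] by simp
  hence "degree (gcd p q) \<noteq> 0" by (simp add: resultant_0_gcd)
  then obtain z where "poly (gcd p q) z = 0"
    using fundamental_theorem_of_algebra[of "gcd p q"] constant_degree[of "gcd p q"] by auto
  thus ?thesis by (metis dvd_trans poly_eq_0_iff_dvd gcd_dvd1 gcd_dvd2)
qed

locale sf = fixes K assumes sfK: "subfield_C K"
begin
lemma K0: "0 \<in> K" and K1: "1 \<in> K" and Kadd: "x \<in> K \<Longrightarrow> y \<in> K \<Longrightarrow> x + y \<in> K"
  and Kmult: "x \<in> K \<Longrightarrow> y \<in> K \<Longrightarrow> x * y \<in> K" and Kuminus: "x \<in> K \<Longrightarrow> - x \<in> K"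
  using sfK unfolding subfield_C_def by blast+

lemma Kinv: "x \<in> K \<Longrightarrow> inverse x \<in> K"
proof (cases "x = 0")
  case True thus ?thesis using K0 by simp
next
  case False
  assume "x \<in> K" thus ?thesis using False sfK unfolding subfield_C_def by blast
qed

lemma Kdiff: "x \<in> K \<Longrightarrow> y \<in> K \<Longrightarrow> x - y \<in> K"
  using Kadd[of x "-y"] Kuminus[of y] by simp
lemma Kdiv: "x \<in> K \<Longrightarrow> y \<in> K \<Longrightarrow> x / y \<in> K"
  using Kmult[OF _ Kinv, of x y] by (simp add: divide_inverse)
lemma Ksum: "(\<And>i. i \<in> A \<Longrightarrow> g i \<in> K) \<Longrightarrow> sum g A \<in> K"
proof (induction A rule: infinite_finite_induct)
  case (infinite A) thus ?case using K0 by simp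
next
  case empty thus ?case using K0 by simp
next
  case (insert a A) thus ?case using Kadd by simp
qed
lemma Kof_nat: "of_nat n \<in> K"
proof (induction n)
  case 0 thus ?case using K0 by simp
next
  case (Suc n) thus ?case using Kadd[OF K1 Suc.IH] by simp
qed

lemma po_add: "poly_over K p \<Longrightarrow> poly_over K q \<Longrightarrow> poly_over K (p + q)"
  unfolding poly_over_def using Kadd by simp
lemma po_diff: "poly_over K p \<Longrightarrow> poly_over K q \<Longrightarrow> poly_over K (p - q)"
  unfolding poly_over_def using Kdiff by simp
lemma po_mult: assumes "poly_over K p" "poly_over K q" shows "poly_over K (p * q)"
  unfolding poly_over_def coeff_mult
proof
  fix n show "(\<Sum>i\<le>n. coeff p i * coeff q (n - i)) \<in> K"
    by (rule Ksum, rule Kmult) (use assms in \<open>simp_all add: poly_over_def\<close>)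
qed
lemma po_monom: "c \<in> K \<Longrightarrow> poly_over K (monom c n)"
  unfolding poly_over_def coeff_monom using K0 by simp
lemma po_const: assumes "c \<in> K" shows "poly_over K [:c:]"
  unfolding poly_over_def
proof
  fix i show "coeff [:c:] i \<in> K" using assms K0 by (cases i) simp_all
qed
lemma po_0: "poly_over K 0" unfolding poly_over_def using K0 by simp
lemma po_numeral: "poly_over K (numeral n)"
proof -
  have "poly_over K [:of_nat (numeral n):]" by (rule po_const[OF Kof_nat])
  moreover have "(numeral n :: complex poly) = [:of_nat (numeral n):]"
    by (simp only: numeral_poly of_nat_numeral)
  ultimately show ?thesis by (simp only:)
qed
lemma po_power: "poly_over K p \<Longrightarrow> poly_over K (p ^ n)"
proof (induction n)
  case 0
  have "poly_over K [:1:]" by (rule po_const[OF K1])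
  thus ?case unfolding power_0 one_pCons .
next
  case (Suc n) thus ?case unfolding power_Suc using po_mult[OF Suc.prems Suc.IH[OF Suc.prems]] by simp
qed

lemma division:
  assumes "poly_over K p" "poly_over K q" "q \<noteq> 0"
  shows "\<exists>d r. poly_over K d \<and> poly_over K r \<and> p = q * d + r \<and> (r = 0 \<or> degree r < degree q)"
  using assms(1)
proof (induction "degree p" arbitrary: p rule: less_induct)
  case less
  show ?case
  proof (cases "p = 0 \<or> degree p < degree q")
    case True thus ?thesis using less.prems po_0 by (intro exI[of _ 0] exI[of _ p]) auto
  next
    case False
    hence p0: "p \<noteq> 0" and dle: "degree q \<le> degree p" by auto
    define c where "c = lead_coeff p / lead_coeff q"
    define k where "k = degree p - degree q"
    define p' where "p' = p - monom c k * q"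
    have cK: "c \<in> K" unfolding c_def using less.prems assms(2) by (auto simp: poly_over_def intro: Kdiv)
    have p'K: "poly_over K p'" unfolding p'_def
      by (intro po_diff less.prems po_mult po_monom cK assms(2))
    have lq: "lead_coeff q \<noteq> 0" using assms(3) by simp
    have cz: "\<And>i. i \<ge> degree p \<Longrightarrow> coeff p' i = 0"
    proof -
      fix i assume i: "i \<ge> degree p"
      show "coeff p' i = 0"
      proof (cases "i = degree p")
        case True
        have "coeff (monom c k * q) i = c * coeff q (i - k)"
          using True dle by (simp add: coeff_monom_mult k_def)
        also have "i - k = degree q" using True dle k_def by simp
        finally show ?thesis using True lq by (simp add: p'_def c_def)
      next
        case False
        hence i': "i > degree p" using i by simp
        have "coeff p i = 0" using i' coeff_eq_0 by blast
        moreover have "coeff (monom c k * q) i = 0"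
        proof -
          have "degree (monom c k * q) \<le> k + degree q"
            by (rule order_trans[OF degree_mult_le]) (simp add: degree_monom_le)
          also have "\<dots> = degree p" using dle k_def by simp
          finally show ?thesis using i' by (intro coeff_eq_0) simp
        qed
        ultimately show ?thesis by (simp add: p'_def)
      qed
    qed
    show ?thesis
    proof (cases "p' = 0")
      case True
      hence "p = q * monom c k" unfolding p'_def by (simp add: mult.commute)
      thus ?thesis using po_monom[OF cK] po_0 by (intro exI[of _ "monom c k"] exI[of _ 0]) auto
    next
      case False
      have "degree p' < degree p"
      proof (cases "degree p")
        case 0 hence "p' = 0" using cz by (intro poly_eqI) simp
        thus ?thesis using False by simp
      next
        case (Suc m)
        have "degree p' \<le> m" by (rule degree_le) (use cz Suc in auto)
        thus ?thesis using Suc by simp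
      qed
      from less.hyps[OF this p'K] obtain d r where dr: "poly_over K d" "poly_over K r"
        "p' = q * d + r" "r = 0 \<or> degree r < degree q" by blast
      have "p = q * (d + monom c k) + r" using dr(3) unfolding p'_def by (simp add: algebra_simps)
      thus ?thesis using dr po_add[OF dr(1) po_monom[OF cK]] by blast
    qed
  qed
qed

lemma conj_root:
  assumes irr: "irreducible_over K P" and g: "poly_over K g"
    and phi: "poly P \<phi> = 0" "poly g \<phi> = 0" and th: "poly P \<theta> = 0"
  shows "poly g \<theta> = 0"
proof -
  have PK: "poly_over K P" and dP: "degree P > 0" using irr by (auto simp: irreducible_over_def)
  hence P0: "P \<noteq> 0" by auto
  define S where "S = {h. poly_over K h \<and> h \<noteq> 0 \<and> poly h \<phi> = 0}"
  have "P \<in> S" using PK P0 phi by (simp add: S_def)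
  define h where "h = (ARG_MIN degree h. h \<in> S)"
  have hS: "h \<in> S" and hmin: "\<And>h'. h' \<in> S \<Longrightarrow> degree h \<le> degree h'"
    using arg_min_nat_lemma[of "\<lambda>h. h \<in> S" P degree] \<open>P \<in> S\<close> unfolding h_def by auto
  have hK: "poly_over K h" and h0: "h \<noteq> 0" and hphi: "poly h \<phi> = 0" using hS by (auto simp: S_def)
  have dvd: "\<exists>d. poly_over K d \<and> g' = h * d" if g': "poly_over K g'" "poly g' \<phi> = 0" for g'
  proof -
    from division[OF g'(1) hK h0] obtain d r where dr: "poly_over K d" "poly_over K r"
      "g' = h * d + r" "r = 0 \<or> degree r < degree h" by blast
    have "poly r \<phi> = 0" using g'(2) hphi dr(3) by simp
    have "r = 0"
    proof (rule ccontr)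
      assume "r \<noteq> 0"
      hence "r \<in> S" using dr(2) \<open>poly r \<phi> = 0\<close> by (simp add: S_def)
      from hmin[OF this] dr(4) \<open>r \<noteq> 0\<close> show False by auto
    qed
    thus ?thesis using dr by auto
  qed
  from dvd[OF PK phi(1)] obtain d where d: "poly_over K d" "P = h * d" by blast
  have irr': "\<forall>q r. poly_over K q \<longrightarrow> poly_over K r \<longrightarrow> P = q * r \<longrightarrow> degree q = 0 \<or> degree r = 0"
    using irr by (simp add: irreducible_over_def)
  have "degree h = 0 \<or> degree d = 0" using irr'[rule_format, OF hK d(1) d(2)] .
  moreover have "degree h \<noteq> 0"
  proof
    assume "degree h = 0"
    then obtain c where "h = [:c:]" by (metis degree_eq_zeroE)
    thus False using h0 hphi by simp
  qed
  ultimately have "degree d = 0" by simp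
  then obtain c where c: "d = [:c:]" by (metis degree_eq_zeroE)
  have "c \<noteq> 0" using P0 d(2) c by auto
  hence hth: "poly h \<theta> = 0" using th d(2) c by simp
  from dvd[OF g phi(2)] obtain d' where "g = h * d'" by blast
  thus ?thesis using hth by simp
qed
end

definition hs :: "nat \<Rightarrow> complex poly \<Rightarrow> complex \<Rightarrow> complex \<Rightarrow> complex" where
  "hs d f s t = (\<Sum>k\<le>d. coeff f k * (of_nat k * s ^ (k - 1)) * t ^ (d - k))"
definition ht :: "nat \<Rightarrow> complex poly \<Rightarrow> complex \<Rightarrow> complex \<Rightarrow> complex" where
  "ht d f s t = (\<Sum>k\<le>d. coeff f k * s ^ k * (of_nat (d - k) * t ^ (d - k - 1)))"

lemma hom_eval_ds: "((\<lambda>s. hom_eval d f s t) has_field_derivative hs d f s t) (at s)"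
  unfolding hom_eval_def hs_def
  by (intro DERIV_sum) (auto intro!: derivative_eq_intros)

lemma hom_eval_dt: "((\<lambda>t. hom_eval d f s t) has_field_derivative ht d f s t) (at t)"
  unfolding hom_eval_def ht_def
  by (intro DERIV_sum) (auto intro!: derivative_eq_intros)

lemma euler: "s * hs d f s t + t * ht d f s t = of_nat d * hom_eval d f s t"
proof -
  have "s * hs d f s t + t * ht d f s t = (\<Sum>k\<le>d. of_nat d * (coeff f k * s ^ k * t ^ (d - k)))"
    unfolding hs_def ht_def sum_distrib_left sum.distrib[symmetric]
  proof (rule sum.cong[OF refl])
    fix k assume k: "k \<in> {..d}"
    have a: "s * (of_nat k * s ^ (k - 1)) = of_nat k * s ^ k"
      by (cases k) auto
    have b: "t * (of_nat (d - k) * t ^ (d - k - 1)) = of_nat (d - k) * t ^ (d - k)"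
      by (cases "d - k") auto
    have c: "of_nat d = (of_nat k + of_nat (d - k) :: complex)" using k by (simp add: of_nat_diff)
    show "s * (coeff f k * (of_nat k * s ^ (k - 1)) * t ^ (d - k)) +
      t * (coeff f k * s ^ k * (of_nat (d - k) * t ^ (d - k - 1))) =
      of_nat d * (coeff f k * s ^ k * t ^ (d - k))"
    proof -
      have "s * (coeff f k * (of_nat k * s ^ (k - 1)) * t ^ (d - k)) +
        t * (coeff f k * s ^ k * (of_nat (d - k) * t ^ (d - k - 1))) =
        coeff f k * t ^ (d - k) * (s * (of_nat k * s ^ (k - 1))) +
        coeff f k * s ^ k * (t * (of_nat (d - k) * t ^ (d - k - 1)))" by (simp add: algebra_simps)
      also have "\<dots> = of_nat d * (coeff f k * s ^ k * t ^ (d - k))" unfolding a b c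
        by (simp add: algebra_simps)
      finally show ?thesis .
    qed
  qed
  thus ?thesis by (simp add: hom_eval_def sum_distrib_left)
qed

lemma hom_eval_1: "degree f \<le> d \<Longrightarrow> hom_eval d f s 1 = poly f s"
  unfolding hom_eval_def poly_altdef
  by (simp, rule sum.mono_neutral_right) (auto simp: coeff_eq_0)

lemma Q_ds: "deriv (\<lambda>s'. Qform a e f s' t x) s =
   (\<Sum>i<3. \<Sum>j<3. hs (a i + a j + e) (f i j) s t * x i * x j)"
  unfolding Qform_def
  by (intro DERIV_imp_deriv DERIV_sum DERIV_cmult_right hom_eval_ds)

lemma Q_dt: "deriv (\<lambda>t'. Qform a e f s t' x) t =
   (\<Sum>i<3. \<Sum>j<3. ht (a i + a j + e) (f i j) s t * x i * x j)"
  unfolding Qform_def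
  by (intro DERIV_imp_deriv DERIV_sum DERIV_cmult_right hom_eval_dt)

lemma upd_deriv: "((\<lambda>y. (x(l := y)) i) has_field_derivative (if i = l then 1 else 0)) (at z)"
  by (cases "i = l") (auto intro: derivative_eq_intros)

lemma Q_dx: "deriv (\<lambda>y. Qform a e f s t (x(l := y))) (x l) =
   (\<Sum>i<3. \<Sum>j<3. hom_eval (a i + a j + e) (f i j) s t *
      ((if i = l then 1 else 0) * x j + x i * (if j = l then 1 else 0)))"
proof -
  have "((\<lambda>y. Qform a e f s t (x(l := y))) has_field_derivative
     (\<Sum>i<3. \<Sum>j<3. hom_eval (a i + a j + e) (f i j) s t *
      ((if i = l then 1 else 0) * (x(l := x l)) j + (x(l := x l)) i * (if j = l then 1 else 0)))) (at (x l))"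
    unfolding Qform_def
    by (intro DERIV_sum) (rule DERIV_cong, (rule DERIV_mult DERIV_cmult upd_deriv)+, simp add: algebra_simps)
  thus ?thesis by (simp add: DERIV_imp_deriv)
qed

lemma s3: "(\<Sum>l<(3::nat). g l) = g 0 + g 1 + (g 2 :: complex)"
  by (simp add: eval_nat_numeral)

lemma sum_ijk: assumes "{i,j,k} = {0,1,2::nat}" "i \<noteq> j" "i \<noteq> k" "j \<noteq> k"
  shows "(\<Sum>l<3. g l) = g i + g j + (g k :: complex)"
proof -
  have "{..<3::nat} = {i,j,k}" using assms(1) by auto
  thus ?thesis using assms(2-4) by (simp add: algebra_simps)
qed

lemma swap_sym:
  fixes M :: "nat \<Rightarrow> nat \<Rightarrow> complex"
  assumes "\<And>l m. l < 3 \<Longrightarrow> m < 3 \<Longrightarrow> M l m = M m l"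
  shows "(\<Sum>l<3. u l * (\<Sum>m<3. M l m * w m)) = (\<Sum>m<3. w m * (\<Sum>l<3. M m l * (u l :: complex)))"
proof -
  have "(\<Sum>l<3. u l * (\<Sum>m<3. M l m * w m)) = (\<Sum>l<3. \<Sum>m<3. w m * (M m l * u l))"
    by (simp add: sum_distrib_left assms mult.commute mult.left_commute)
  also have "\<dots> = (\<Sum>m<3. \<Sum>l<3. w m * (M m l * u l))" by (rule sum.swap)
  also have "\<dots> = (\<Sum>m<3. w m * (\<Sum>l<3. M m l * u l))" by (simp add: sum_distrib_left)
  finally show ?thesis .
qed

lemma qf_zero:
  fixes M :: "nat \<Rightarrow> nat \<Rightarrow> complex"
  assumes "\<And>l. l < 3 \<Longrightarrow> (\<Sum>m<3. M l m * w m) = (0::complex)"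
  shows "(\<Sum>l<3. \<Sum>m<3. M l m * w l * w m) = 0"
proof -
  have "(\<Sum>l<3. \<Sum>m<3. M l m * w l * w m) = (\<Sum>l<3. w l * (\<Sum>m<3. M l m * w m))"
    by (simp add: sum_distrib_left mult.commute mult.left_commute)
  also have "\<dots> = 0" using assms by simp
  finally show ?thesis .
qed

lemma dx_formula:
  fixes M :: "nat \<Rightarrow> nat \<Rightarrow> complex"
  assumes "\<And>l m. l < 3 \<Longrightarrow> m < 3 \<Longrightarrow> M l m = M m l" "l < 3"
  shows "(\<Sum>i<3. \<Sum>j<3. M i j * ((if i = l then 1 else 0) * u j + u i * (if j = l then 1 else 0)))
     = 2 * (\<Sum>j<3. M l j * (u j :: complex))"
proof -
  have "l = 0 \<or> l = 1 \<or> l = 2" using assms(2) by auto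
  moreover have "M 1 0 = M 0 1" "M 2 0 = M 0 2" "M 2 1 = M 1 2" using assms(1) by auto
  ultimately show ?thesis by (auto simp: s3 algebra_simps)
qed

lemma weighted_zero:
  fixes M :: "nat \<Rightarrow> nat \<Rightarrow> complex"
  assumes sym: "\<And>l m. l < 3 \<Longrightarrow> m < 3 \<Longrightarrow> M l m = M m l"
    and z: "\<And>l. l < 3 \<Longrightarrow> (\<Sum>m<3. M l m * w m) = (0::complex)"
  shows "(\<Sum>l<3. \<Sum>m<3. of_nat (a l + a m + e) * M l m * w l * w m) = 0"
proof -
  have z0: "M 0 0 * w 0 + M 0 1 * w 1 + M 0 2 * w 2 = 0"
   and z1: "M 1 0 * w 0 + M 1 1 * w 1 + M 1 2 * w 2 = 0"
   and z2: "M 2 0 * w 0 + M 2 1 * w 1 + M 2 2 * w 2 = 0"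
    using z[of 0] z[of 1] z[of 2] by (simp_all add: s3)
  have sy: "M 1 0 = M 0 1" "M 2 0 = M 0 2" "M 2 1 = M 1 2" using sym by auto
  have "(\<Sum>l<3. \<Sum>m<3. of_nat (a l + a m + e) * M l m * w l * w m) =
     (of_nat (a 0) * w 0 + of_nat e * w 0) * (M 0 0 * w 0 + M 0 1 * w 1 + M 0 2 * w 2)
   + (of_nat (a 1) * w 1 + of_nat e * w 1) * (M 1 0 * w 0 + M 1 1 * w 1 + M 1 2 * w 2)
   + (of_nat (a 2) * w 2 + of_nat e * w 2) * (M 2 0 * w 0 + M 2 1 * w 1 + M 2 2 * w 2)
   + of_nat (a 0) * w 0 * (M 0 0 * w 0 + M 0 1 * w 1 + M 0 2 * w 2)
   + of_nat (a 1) * w 1 * (M 1 0 * w 0 + M 1 1 * w 1 + M 1 2 * w 2)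
   + of_nat (a 2) * w 2 * (M 2 0 * w 0 + M 2 1 * w 1 + M 2 2 * w 2)"
    unfolding s3 sy by (simp add: algebra_simps)
  also have "\<dots> = 0" unfolding z0 z1 z2 by simp
  finally show ?thesis .
qed


lemma distinct3: assumes "{i,j,k} = {0,1,2::nat}" shows "i \<noteq> j" "i \<noteq> k" "j \<noteq> k"
proof -
  have c: "card {i,j,k} = 3" using assms by simp
  show "i \<noteq> j" "i \<noteq> k" "j \<noteq> k" using c by (auto simp: card_insert_if split: if_splits)
qed

lemma geo_main:
  fixes a :: "nat \<Rightarrow> nat" and e :: nat and f :: "nat \<Rightarrow> nat \<Rightarrow> complex poly"
    and \<theta> :: complex and x :: "nat \<Rightarrow> complex" and i j k :: nat
  assumes f_sym: "\<And>i j. i < 3 \<Longrightarrow> j < 3 \<Longrightarrow> f i j = f j i"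
    and f_deg: "\<And>i j. i < 3 \<Longrightarrow> j < 3 \<Longrightarrow> degree (f i j) \<le> a i + a j + e"
    and smooth: "smooth_surface a e f"
    and xs: "conic_singular_point a e f \<theta> x"
    and xi: "x i \<noteq> 0"
    and ijk: "{i, j, k} = {0, 1, 2}"
    and dz: "poly (small_delta f j k) \<theta> = 0"
  shows False
proof -
  note dist = distinct3[OF ijk]
  have "i \<in> {i,j,k}" "j \<in> {i,j,k}" "k \<in> {i,j,k}" by auto
  hence lt: "i < 3" "j < 3" "k < 3" unfolding ijk by auto
  note sijk = sum_ijk[OF ijk dist]
  define M where "M l m = poly (f l m) \<theta>" for l m
  have Msym: "\<And>l m. l < 3 \<Longrightarrow> m < 3 \<Longrightarrow> M l m = M m l" using f_sym by (simp add: M_def)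
  have Hth: "\<And>l m. l < 3 \<Longrightarrow> m < 3 \<Longrightarrow> hom_eval (a l + a m + e) (f l m) \<theta> 1 = M l m"
    using f_deg hom_eval_1 M_def by simp
  have dQx: "deriv (\<lambda>y. Qform a e f \<theta> 1 (u(l := y))) (u l) = 2 * (\<Sum>m<3. M l m * u m)"
    if l: "l < 3" for u l
  proof -
    have "deriv (\<lambda>y. Qform a e f \<theta> 1 (u(l := y))) (u l) =
      (\<Sum>i<3. \<Sum>j<3. M i j * ((if i = l then 1 else 0) * u j + u i * (if j = l then 1 else 0)))"
      unfolding Q_dx by (intro sum.cong refl) (simp add: Hth)
    also have "\<dots> = 2 * (\<Sum>m<3. M l m * u m)" by (rule dx_formula[OF Msym l])
    finally show ?thesis .
  qed
  have Mx: "(\<Sum>m<3. M l m * x m) = 0" if "l < 3" for l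
    using xs that dQx[OF that, of x] by (simp add: conic_singular_point_def)
  have "(2 * M j k) ^ 2 - 4 * M j j * M k k = 0"
    using dz by (simp add: small_delta_def M_def)
  hence djk: "M j k ^ 2 = M j j * M k k" by (simp add: power2_eq_square algebra_simps)
  obtain vj vk where vnz: "vj \<noteq> 0 \<or> vk \<noteq> 0" and vr1: "M j j * vj + M j k * vk = 0"
     and vr2: "M k j * vj + M k k * vk = 0"
  proof (cases "M j j = 0 \<and> M j k = 0")
    case True
    thus ?thesis using that[of 1 0] Msym[OF lt(2,3)] by auto
  next
    case False
    show ?thesis
      by (rule that[of "M j k" "- M j j"]) (use False Msym[OF lt(2,3)] djk in \<open>auto simp: power2_eq_square algebra_simps\<close>)
  qed
  define v where "v l = (if l = j then vj else if l = k then vk else 0)" for l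
  have vi: "v i = 0" "v j = vj" "v k = vk" using dist by (auto simp: v_def)
  have Mvj: "(\<Sum>m<3. M j m * v m) = 0" unfolding sijk vi using vr1 by simp
  have Mvk: "(\<Sum>m<3. M k m * v m) = 0" unfolding sijk vi using vr2 by simp
  have "(\<Sum>l<3. x l * (\<Sum>m<3. M l m * v m)) = (\<Sum>m<3. v m * (\<Sum>l<3. M m l * x l))"
    by (rule swap_sym[OF Msym])
  also have "\<dots> = 0" using Mx by simp
  finally have "x i * (\<Sum>m<3. M i m * v m) = 0" using Mvj Mvk sijk[of "\<lambda>l. x l * (\<Sum>m<3. M l m * v m)"] by simp
  hence Mvi: "(\<Sum>m<3. M i m * v m) = 0" using xi by simp
  have Mv: "(\<Sum>m<3. M l m * v m) = 0" if "l < 3" for l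
  proof -
    have "l \<in> {i,j,k}" using ijk that by auto
    thus ?thesis using Mvi Mvj Mvk by auto
  qed
  define N where "N l m = hs (a l + a m + e) (f l m) \<theta> 1" for l m
  define qf where "qf u w = (\<Sum>l<3. \<Sum>m<3. N l m * u l * w m)" for u w
  have qexp: "qf (\<lambda>l. \<alpha> * x l + \<beta> * v l) (\<lambda>l. \<alpha> * x l + \<beta> * v l) =
     \<alpha>^2 * qf x x + \<alpha> * \<beta> * (qf x v + qf v x) + \<beta>^2 * qf v v" for \<alpha> \<beta>
    unfolding qf_def s3 by (simp add: algebra_simps power2_eq_square)
  obtain \<alpha> \<beta> where q0: "qf (\<lambda>l. \<alpha> * x l + \<beta> * v l) (\<lambda>l. \<alpha> * x l + \<beta> * v l) = 0"
    and wnz: "\<exists>l<3. \<alpha> * x l + \<beta> * v l \<noteq> 0"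
  proof (cases "qf x x = 0")
    case True
    show ?thesis by (rule that[of 1 0]) (use True qexp[of 1 0] xi lt in auto)
  next
    case False
    let ?p = "[:qf v v, qf x v + qf v x, qf x x:]"
    have "degree ?p = 2" using False by simp
    then obtain \<alpha> where r: "poly ?p \<alpha> = 0"
      using fundamental_theorem_of_algebra[of ?p] constant_degree[of ?p] by auto
    show ?thesis
    proof (rule that[of \<alpha> 1])
      show "qf (\<lambda>l. \<alpha> * x l + 1 * v l) (\<lambda>l. \<alpha> * x l + 1 * v l) = 0"
        using r qexp[of \<alpha> 1] by (simp add: algebra_simps power2_eq_square)
      show "\<exists>l<3. \<alpha> * x l + 1 * v l \<noteq> 0"
      proof (cases "\<alpha> = 0")
        case True thus ?thesis using vnz vi lt by auto
      next
        case False thus ?thesis using xi vi lt by (intro exI[of _ i]) auto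
      qed
    qed
  qed
  define w where "w l = \<alpha> * x l + \<beta> * v l" for l
  have Mw: "(\<Sum>m<3. M l m * w m) = 0" if "l < 3" for l
  proof -
    have "(\<Sum>m<3. M l m * w m) = \<alpha> * (\<Sum>m<3. M l m * x m) + \<beta> * (\<Sum>m<3. M l m * v m)"
      unfolding w_def by (simp add: algebra_simps sum.distrib sum_distrib_left)
    thus ?thesis using Mx[OF that] Mv[OF that] by simp
  qed
  have qw: "qf w w = 0" using q0 unfolding w_def[abs_def] .
  have Qw: "Qform a e f \<theta> 1 w = 0"
  proof -
    have "Qform a e f \<theta> 1 w = (\<Sum>l<3. \<Sum>m<3. M l m * w l * w m)"
      unfolding Qform_def by (intro sum.cong refl) (simp add: Hth)
    also have "\<dots> = 0" by (rule qf_zero[OF Mw])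
    finally show ?thesis .
  qed
  have ds: "deriv (\<lambda>s'. Qform a e f s' 1 w) \<theta> = 0"
    unfolding Q_ds using qw by (simp add: qf_def N_def)
  have dt: "deriv (\<lambda>t'. Qform a e f \<theta> t' w) 1 = 0"
  proof -
    have "deriv (\<lambda>t'. Qform a e f \<theta> t' w) 1 =
      (\<Sum>l<(3::nat). \<Sum>m<(3::nat). of_nat (a l + a m + e) * M l m * w l * w m - \<theta> * (N l m * w l * w m))"
      unfolding Q_dt
    proof (intro sum.cong refl)
      fix l m :: nat assume "l \<in> {..<3}" "m \<in> {..<3}"
      hence lm: "l < 3" "m < 3" by auto
      have h: "ht (a l + a m + e) (f l m) \<theta> 1 = of_nat (a l + a m + e) * M l m - \<theta> * N l m"
        using euler[of \<theta> "a l + a m + e" "f l m" 1] Hth[OF lm] unfolding N_def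
        by (simp add: algebra_simps)
      show "ht (a l + a m + e) (f l m) \<theta> 1 * w l * w m =
        of_nat (a l + a m + e) * M l m * w l * w m - \<theta> * (N l m * w l * w m)"
        unfolding h by (simp add: algebra_simps)
    qed
    also have "\<dots> = (\<Sum>l<(3::nat). \<Sum>m<(3::nat). of_nat (a l + a m + e) * M l m * w l * w m) - \<theta> * qf w w"
      unfolding qf_def by (simp add: sum_subtractf sum_distrib_left)
    also have "\<dots> = 0" using weighted_zero[OF Msym Mw] qw by simp
    finally show ?thesis .
  qed
  have dx: "\<forall>l<3. deriv (\<lambda>y. Qform a e f \<theta> 1 (w(l := y))) (w l) = 0"
    using dQx Mw by simp
  have wnz': "\<exists>l<3. w l \<noteq> 0" using wnz by (simp add: w_def)
  show False using smooth[unfolded smooth_surface_def, rule_format, of \<theta> 1 w] wnz' Qw ds dt dx by auto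
qed


theorem lemma4p7:
  fixes K :: "complex set" and a :: "nat \<Rightarrow> nat" and e :: nat
    and f :: "nat \<Rightarrow> nat \<Rightarrow> complex poly"
    and Dp :: "complex poly" and \<theta> :: complex and x :: "nat \<Rightarrow> complex"
    and i j k :: nat
  assumes K: "number_field K"
    and a0: "a 0 = 0"
    and f_sym: "\<And>i j. i < 3 \<Longrightarrow> j < 3 \<Longrightarrow> f i j = f j i"
    and f_deg: "\<And>i j. i < 3 \<Longrightarrow> j < 3 \<Longrightarrow> degree (f i j) \<le> a i + a j + e"
    and f_int: "\<And>i j. i < 3 \<Longrightarrow> j < 3 \<Longrightarrow> poly_over (ring_of_integers K) (f i j)"
    and smooth: "smooth_surface a e f"
    and t_ndvd: "coeff (Delta f) (2 * a 1 + 2 * a 2 + 3 * e) \<noteq> 0"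
    \<comment> \<open>the closed point p: Delta_p is an irreducible factor of Delta over O_K with
        Delta_p(1,0) \<noteq> 0; Dp = Delta_p(s,1), a binary form of degree (degree Dp)\<close>
    and Dp_int: "poly_over (ring_of_integers K) Dp"
    and Dp_irr: "irreducible_over K Dp"
    and Dp_dvd: "\<exists>q. poly_over K q \<and> Delta f = Dp * q"
    and theta: "poly Dp \<theta> = 0"
    and x_sing: "conic_singular_point a e f \<theta> x"
    and i_def: "i = (LEAST l. x l \<noteq> 0)"
    and jk: "j < k" "{i, j, k} = {0, 1, 2}"
  shows "form_resultant (degree Dp) (2 * (a j + a k + e)) Dp (small_delta f j k) \<noteq> 0"
proof
  assume res0: "form_resultant (degree Dp) (2 * (a j + a k + e)) Dp (small_delta f j k) = 0"
  have sfK: "subfield_C K" using K by (simp add: number_field_def)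
  interpret sf K by (rule sf.intro[OF sfK])
  have dP: "degree Dp > 0" using Dp_irr by (simp add: irreducible_over_def)
  note dist = distinct3[OF jk(2)]
  have "i \<in> {i,j,k}" "j \<in> {i,j,k}" "k \<in> {i,j,k}" by auto
  hence lt: "i < 3" "j < 3" "k < 3" unfolding jk(2) by auto
  have deg2: "degree (2 :: complex poly) = 0" "degree (4 :: complex poly) = 0"
    by (rule degree_numeral)+
  have dm: "degree (c * p) \<le> degree p" if "degree c = 0" for c p :: "complex poly"
    using degree_mult_le[of c p] that by simp
  have "degree ((2 * f j k) ^ 2) \<le> 2 * degree (2 * f j k)"
    using degree_power_le[of "2 * f j k" 2] by (simp only: mult.commute)
  also have "\<dots> \<le> 2 * (a j + a k + e)" using le_trans[OF dm[OF deg2(1), of "f j k"] f_deg[OF lt(2,3)]] by (rule mult_le_mono2)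
  finally have d1: "degree ((2 * f j k) ^ 2) \<le> 2 * (a j + a k + e)" .
  have "degree (4 * f j j * f k k) \<le> degree (4 * f j j) + degree (f k k)" by (rule degree_mult_le)
  also have "\<dots> \<le> 2 * (a j + a k + e)"
    using add_mono[OF le_trans[OF dm[OF deg2(2), of "f j j"] f_deg[OF lt(2,2)]] f_deg[OF lt(3,3)]] by simp
  finally have d2: "degree (4 * f j j * f k k) \<le> 2 * (a j + a k + e)" .
  have degd: "degree (small_delta f j k) \<le> 2 * (a j + a k + e)"
    unfolding small_delta_def using d1 d2 by (rule degree_diff_le)
  from common_root[OF degd dP res0[unfolded form_resultant_def]]
  obtain \<phi> where phi: "poly Dp \<phi> = 0" "poly (small_delta f j k) \<phi> = 0" by blast
  have fK: "poly_over K (f l m)" if "l < 3" "m < 3" for l m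
    using f_int[OF that] unfolding poly_over_def ring_of_integers_def by blast
  have dK: "poly_over K (small_delta f j k)"
    unfolding small_delta_def
    by (rule po_diff[OF po_power[OF po_mult[OF po_numeral fK[OF lt(2,3)]]] po_mult[OF po_mult[OF po_numeral fK[OF lt(2,2)]] fK[OF lt(3,3)]]])
  have dth: "poly (small_delta f j k) \<theta> = 0"
    by (rule conj_root[OF Dp_irr dK phi theta])
  have "\<exists>l. x l \<noteq> 0" using x_sing unfolding conic_singular_point_def by blast
  hence xi: "x i \<noteq> 0" unfolding i_def by (rule LeastI_ex)
  show False
    by (rule geo_main[OF f_sym f_deg smooth x_sing xi jk(2) dth])
qed

end
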